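(* Let $d$ be a prime, $m,n,f$ nonnegative integers with $2f<n$, and let $X,Y$ be disjoint sets with $|X|=m$, $|Y|=n$. Let $\Gamma$ be a random symmetric $(n+m)\times(n+m)$ matrix indexed by $X\cup Y$ with entries in $\mathbb{Z}_d$, such that $\Gamma_{kk}=0$ for all $k$ and the entries $\Gamma_{kj}$ with $k>j$ (for some fixed ordering) are independent and uniformly distributed in $\mathbb{Z}_d$. Let $P$ be the probability that the corresponding graph code $V_\Gamma$ does not correct $f$ errors. Then $$\frac1n\log_2P\le\Bigl(\frac mn+\frac{4f}n-1\Bigr)\log_2d+H_2\Bigl(\frac{2f}n\Bigr),$$ where $H_2(r)=-r\log_2r-(1-r)\log_2(1-r)$.
   Context: For each $x\in X\cup Y$ let $\mathcal{H}_x\cong\mathbb{C}^d$ with orthonormal basis $|j\rangle$, $j\in\mathbb{Z}_d$; $\mathcal{H}_W=\bigotimes_{x\in W}\mathcal{H}_x$ with product basis $|j_W\rangle$. The graph code $V_\Gamma:\mathcal{H}_X\to\mathcal{H}_Y$ is defined by $\langle j_Y|V_\Gamma|j_X\rangle=d^{-n/2}\exp\bigl(\frac{i\pi}{d}\sum_{x,y\in X\cup Y}j_x\Gamma_{xy}j_y\bigr)$. Identify $\mathcal{H}_Y$ with $(\mathbb{C}^d)^{\otimes n}$ and let $\mathcal{E}_f$ be the linear span of all operators $A_1\otimes\cdots\otimes A_n$ with $A_i\neq\mathbb{1}$ for at most $f$ indices. $V_\Gamma$ corrects $f$ errors if for all $F_1,F_2\in\mathcal{E}_f$ there is a number $\omega(F_1^*F_2)$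 with $\langle V_\Gamma\phi_1,F_1^*F_2V_\Gamma\phi_2\rangle=\langle\phi_1,\phi_2\rangle\,\omega(F_1^*F_2)$ for all $\phi_1,\phi_2\in\mathcal{H}_X$. *)

theory Defs
  imports "HOL-Probability.Probability"
begin

text \<open>Basis configurations of H_W: functions W to {0..<d} (Z_d), extensional outside W.\<close>
definition confs :: "'a set \<Rightarrow> nat \<Rightarrow> ('a \<Rightarrow> nat) set" where
  "confs W d = (W \<rightarrow>\<^sub>E {0..<d})"

definition adj_mats :: "nat \<Rightarrow> 'a set \<Rightarrow> ('a \<Rightarrow> 'a \<Rightarrow> nat) set" where
  "adj_mats d Z = {G. (\<forall>k l. G k l < d) \<and> (\<forall>k l. G k l = G l k) \<and> (\<forall>k. G k k = 0)
                     \<and> (\<forall>k l. k \<notin> Z \<or> l \<notin> Z \<longrightarrow> G k l = 0)}"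

text \<open>Matrix entry <j_Y| V_Gamma |j_X>.\<close>
definition graph_code :: "nat \<Rightarrow> 'a set \<Rightarrow> 'a set \<Rightarrow> ('a \<Rightarrow> 'a \<Rightarrow> nat)
    \<Rightarrow> ('a \<Rightarrow> nat) \<Rightarrow> ('a \<Rightarrow> nat) \<Rightarrow> complex" where
  "graph_code d X Y G jY jX =
     (let j = (\<lambda>x. if x \<in> X then jX x else jY x) in
      complex_of_real (1 / sqrt (real d) ^ card Y) *
      exp (\<i> * complex_of_real (pi / real d) *
           of_nat (\<Sum>x\<in>X \<union> Y. \<Sum>y\<in>X \<union> Y. j x * G x y * j y)))"

definition apply_code :: "nat \<Rightarrow> 'a set \<Rightarrow> 'a set \<Rightarrow> ('a \<Rightarrow> 'a \<Rightarrow> nat)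
    \<Rightarrow> (('a \<Rightarrow> nat) \<Rightarrow> complex) \<Rightarrow> ('a \<Rightarrow> nat) \<Rightarrow> complex" where
  "apply_code d X Y G \<phi> jY = (\<Sum>jX\<in>confs X d. graph_code d X Y G jY jX * \<phi> jX)"

definition hinner :: "'a set \<Rightarrow> nat \<Rightarrow> (('a \<Rightarrow> nat) \<Rightarrow> complex)
    \<Rightarrow> (('a \<Rightarrow> nat) \<Rightarrow> complex) \<Rightarrow> complex" where
  "hinner W d u v = (\<Sum>j\<in>confs W d. cnj (u j) * v j)"

text \<open>Operators on H_Y as matrices F j k = <j|F|k>; adjoint, product, application.\<close>
definition op_adj :: "(('a \<Rightarrow> nat) \<Rightarrow> ('a \<Rightarrow> nat) \<Rightarrow> complex)
    \<Rightarrow> ('a \<Rightarrow> nat) \<Rightarrow> ('a \<Rightarrow> nat) \<Rightarrow> complex" where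
  "op_adj F j k = cnj (F k j)"

definition op_mult :: "'a set \<Rightarrow> nat \<Rightarrow> (('a \<Rightarrow> nat) \<Rightarrow> ('a \<Rightarrow> nat) \<Rightarrow> complex)
    \<Rightarrow> (('a \<Rightarrow> nat) \<Rightarrow> ('a \<Rightarrow> nat) \<Rightarrow> complex)
    \<Rightarrow> ('a \<Rightarrow> nat) \<Rightarrow> ('a \<Rightarrow> nat) \<Rightarrow> complex" where
  "op_mult W d F G j k = (\<Sum>l\<in>confs W d. F j l * G l k)"

definition op_apply :: "'a set \<Rightarrow> nat \<Rightarrow> (('a \<Rightarrow> nat) \<Rightarrow> ('a \<Rightarrow> nat) \<Rightarrow> complex)
    \<Rightarrow> (('a \<Rightarrow> nat) \<Rightarrow> complex) \<Rightarrow> ('a \<Rightarrow> nat) \<Rightarrow> complex" where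
  "op_apply W d F v j = (\<Sum>k\<in>confs W d. F j k * v k)"

definition non_identity :: "nat \<Rightarrow> (nat \<Rightarrow> nat \<Rightarrow> complex) \<Rightarrow> bool" where
  "non_identity d A = (\<exists>a<d. \<exists>b<d. A a b \<noteq> (if a = b then 1 else 0))"

definition tensor_op :: "'a set \<Rightarrow> ('a \<Rightarrow> nat \<Rightarrow> nat \<Rightarrow> complex)
    \<Rightarrow> ('a \<Rightarrow> nat) \<Rightarrow> ('a \<Rightarrow> nat) \<Rightarrow> complex" where
  "tensor_op Y A j k = (\<Prod>y\<in>Y. A y (j y) (k y))"

definition error_space :: "nat \<Rightarrow> 'a set \<Rightarrow> nat
    \<Rightarrow> (('a \<Rightarrow> nat) \<Rightarrow> ('a \<Rightarrow> nat) \<Rightarrow> complex) set" where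
  "error_space d Y f = {F. \<exists>(N::nat) (c::nat \<Rightarrow> complex) A.
      (\<forall>i<N. card {y\<in>Y. non_identity d (A i y)} \<le> f) \<and>
      F = (\<lambda>j k. \<Sum>i<N. c i * tensor_op Y (A i) j k)}"

definition corrects :: "nat \<Rightarrow> 'a set \<Rightarrow> 'a set \<Rightarrow> ('a \<Rightarrow> 'a \<Rightarrow> nat) \<Rightarrow> nat \<Rightarrow> bool" where
  "corrects d X Y G f = (\<forall>F1\<in>error_space d Y f. \<forall>F2\<in>error_space d Y f. \<exists>\<omega>::complex.
     \<forall>\<phi>1 \<phi>2. hinner Y d (apply_code d X Y G \<phi>1)
                 (op_apply Y d (op_mult Y d (op_adj F1) F2) (apply_code d X Y G \<phi>2))
               = hinner X d \<phi>1 \<phi>2 * \<omega>)"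

definition H2 :: "real \<Rightarrow> real" where
  "H2 r = - r * log 2 r - (1 - r) * log 2 (1 - r)"

end

theory Submission
  imports Defs
begin

lemma binom_entropy:
  fixes n k :: nat assumes "k < n"
  shows "log 2 (real (n choose k)) \<le> real n * H2 (real k / real n)"
proof (cases "k = 0")
  case True thus ?thesis by (simp add: H2_def)
next
  case False
  define p where "p = real k / real n"
  have p0: "0 < p" and p1: "p < 1" using assms False by (auto simp: p_def)
  have "1 = (p + (1 - p)) ^ n" by simp
  also have "\<dots> = (\<Sum>i\<le>n. real (n choose i) * p ^ i * (1 - p) ^ (n - i))"
    by (subst binomial_ring) simp
  also have "\<dots> \<ge> real (n choose k) * p ^ k * (1 - p) ^ (n - k)"
    by (rule member_le_sum[where f="\<lambda>i. real (n choose i) * p ^ i * (1 - p) ^ (n - i)"])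
       (use assms p0 p1 in auto)
  finally have le1: "real (n choose k) * p ^ k * (1 - p) ^ (n - k) \<le> 1" .
  have cpos: "real (n choose k) > 0" using assms by simp
  have "log 2 (real (n choose k) * p ^ k * (1 - p) ^ (n - k)) \<le> log 2 1"
    using le1 cpos p0 p1 by (intro log_le_cancel_iff[THEN iffD2]) auto
  hence "log 2 (real (n choose k)) + real k * log 2 p + real (n - k) * log 2 (1 - p) \<le> 0"
    using cpos p0 p1 by (simp add: log_mult log_nat_power)
  moreover have "real n * H2 p = - real k * log 2 p - real (n - k) * log 2 (1 - p)"
    using assms by (simp add: H2_def p_def field_simps of_nat_diff)
  ultimately show ?thesis unfolding p_def[symmetric] by linarith
qed

lemma adj_finite:
  assumes "finite Z"
  shows "finite (adj_mats d Z)"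
proof -
  have "adj_mats d Z \<subseteq> (\<lambda>h k l. if k \<in> Z \<and> l \<in> Z then h (k, l) else 0) ` ((Z \<times> Z) \<rightarrow>\<^sub>E {0..<d})"
  proof
    fix G assume G: "G \<in> adj_mats d Z"
    show "G \<in> (\<lambda>h k l. if k \<in> Z \<and> l \<in> Z then h (k, l) else 0) ` ((Z \<times> Z) \<rightarrow>\<^sub>E {0..<d})"
    proof
      show "restrict (\<lambda>(k,l). G k l) (Z \<times> Z) \<in> (Z \<times> Z) \<rightarrow>\<^sub>E {0..<d}"
        using G by (auto simp: adj_mats_def)
      show "G = (\<lambda>k l. if k \<in> Z \<and> l \<in> Z then restrict (\<lambda>(k,l). G k l) (Z \<times> Z) (k, l) else 0)"
        using G by (auto simp: adj_mats_def fun_eq_iff)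
    qed
  qed
  thus ?thesis by (rule finite_subset) (use assms in \<open>auto intro!: finite_PiE\<close>)
qed

lemma adj_nonempty: "d > 0 \<Longrightarrow> (\<lambda>k l. 0) \<in> adj_mats d Z"
  by (simp add: adj_mats_def)

definition shiftG :: "nat \<Rightarrow> 'a set \<Rightarrow> 'a \<Rightarrow> ('a \<Rightarrow> nat) \<Rightarrow> ('a \<Rightarrow> 'a \<Rightarrow> nat) \<Rightarrow> ('a \<Rightarrow> 'a \<Rightarrow> nat)" where
  "shiftG d R z0 c G = (\<lambda>k l. if k \<in> R \<and> l = z0 then (G k l + c k) mod d
      else if l \<in> R \<and> k = z0 then (G k l + c l) mod d else G k l)"

lemma shiftG_adj:
  assumes "G \<in> adj_mats d Z" "R \<subseteq> Z" "z0 \<in> Z" "z0 \<notin> R" "d > 0"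
  shows "shiftG d R z0 c G \<in> adj_mats d Z"
  using assms unfolding adj_mats_def shiftG_def by (auto simp: add.commute)

lemma shiftG_inj:
  assumes "d > 0"
  shows "inj_on (shiftG d R z0 c) (adj_mats d Z)"
proof (rule inj_onI)
  fix G H assume G: "G \<in> adj_mats d Z" and H: "H \<in> adj_mats d Z"
    and eq: "shiftG d R z0 c G = shiftG d R z0 c H"
  show "G = H"
  proof (intro ext)
    fix k l
    have e: "shiftG d R z0 c G k l = shiftG d R z0 c H k l" using eq by simp
    have lt: "G k l < d" "H k l < d" using G H by (auto simp: adj_mats_def)
    have aux: "\<And>a b e. a < d \<Longrightarrow> b < d \<Longrightarrow> (a + e) mod d = (b + e) mod d \<Longrightarrow> a = b"
    proof -
      fix a b e :: nat assume ab: "a < d" "b < d" and m: "(a + e) mod d = (b + e) mod d"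
      have "int ((a + e) mod d) = int ((b + e) mod d)" using m by simp
      hence "(int a + int e) mod int d = (int b + int e) mod int d" by (simp add: zmod_int)
      hence "(int a + int e - int e) mod int d = (int b + int e - int e) mod int d"
        by (rule mod_diff_cong) simp
      hence "int a mod int d = int b mod int d" by simp
      thus "a = b" using ab by simp
    qed
    show "G k l = H k l"
      using e lt aux[of "G k l" "H k l"] unfolding shiftG_def by (auto split: if_splits)
  qed
qed

lemma shiftG_phi:
  assumes "finite T" "z0 \<in> T" "T \<inter> R = {}" "r \<in> R"
  shows "(\<Sum>t\<in>T. shiftG d R z0 c G r t * v t) mod d = ((\<Sum>t\<in>T. G r t * v t) + c r * v z0) mod d"
proof -
  have rz: "r \<noteq> z0" using assms by auto
  define Sr where "Sr = (\<Sum>t\<in>T-{z0}. G r t * v t)"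
  have e1: "(\<Sum>t\<in>T. shiftG d R z0 c G r t * v t) = ((G r z0 + c r) mod d) * v z0 + Sr"
  proof -
    have "(\<Sum>t\<in>T. shiftG d R z0 c G r t * v t) = shiftG d R z0 c G r z0 * v z0 + (\<Sum>t\<in>T-{z0}. shiftG d R z0 c G r t * v t)"
      using assms by (simp add: sum.remove[of T z0])
    also have "(\<Sum>t\<in>T-{z0}. shiftG d R z0 c G r t * v t) = Sr"
      unfolding Sr_def using assms rz by (intro sum.cong) (auto simp: shiftG_def)
    finally show ?thesis using assms by (simp add: shiftG_def)
  qed
  have e2: "(\<Sum>t\<in>T. G r t * v t) = G r z0 * v z0 + Sr"
    unfolding Sr_def using assms by (simp add: sum.remove[of T z0])
  have e3: "(((G r z0 + c r) mod d) * v z0 + Sr) mod d = ((G r z0 + c r) * v z0 + Sr) mod d"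
    by (metis mod_add_left_eq mod_mult_left_eq)
  have e4: "(G r z0 + c r) * v z0 + Sr = (G r z0 * v z0 + Sr) + c r * v z0"
    by (simp add: algebra_simps)
  show ?thesis unfolding e1 e2 e3 e4 ..
qed

lemma modlem:
  fixes S w inv a b d :: nat
  assumes "(w * inv) mod d = 1" "S mod d = a"
  shows "(S + ((b * inv) mod d) * w) mod d = (a + b) mod d"
proof -
  have "(S + ((b * inv) mod d) * w) mod d = (S mod d + (b * inv * w) mod d) mod d"
    by (metis mod_add_eq mod_mult_left_eq)
  also have "(b * inv * w) mod d = (b * ((w * inv) mod d)) mod d"
    by (metis mod_mult_right_eq mult.assoc mult.commute)
  finally show ?thesis using assms by (simp add: mod_add_right_eq)
qed

lemma exists_inv:
  fixes w d :: nat
  assumes "prime d" "0 < w" "w < d"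
  shows "\<exists>inv. (w * inv) mod d = 1"
proof -
  have "\<not> d dvd w" using assms by (auto dest: dvd_imp_le)
  hence "coprime d w" using assms by (simp add: prime_imp_coprime)
  hence g: "gcd w d = 1" by (simp add: coprime_iff_gcd_eq_1 gcd.commute)
  obtain x y where "w * x = d * y + gcd w d" using bezout_nat[of w d] assms by auto
  hence "w * x = d * y + 1" using g by simp
  hence "(w * x) mod d = (1 + y * d) mod d" by (simp add: mult.commute add.commute)
  also have "\<dots> = 1 mod d" by (rule mod_mult_self1)
  also have "(1::nat) mod d = 1" using assms prime_gt_1_nat by simp
  finally show ?thesis by blast
qed

lemma fiber_card:
  assumes pd: "prime d" and fZ: "finite Z" and fT: "finite T" and TZ: "T \<subseteq> Z" and RZ: "R \<subseteq> Z"
    and TR: "T \<inter> R = {}" and z0: "z0 \<in> T" and v0: "0 < v z0" "v z0 < d"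
  shows "card {G \<in> adj_mats d Z. \<forall>r\<in>R. (\<Sum>t\<in>T. G r t * v t) mod d = 0} * d ^ card R
         = card (adj_mats d Z)"
proof -
  have d0: "d > 0" using pd prime_gt_0_nat by blast
  have fR: "finite R" using RZ fZ finite_subset by blast
  obtain inv where inv: "(v z0 * inv) mod d = 1" using exists_inv[OF pd v0] by blast
  define A where "A = adj_mats d Z"
  have fA: "finite A" unfolding A_def using fZ by (rule adj_finite)
  define \<Phi> where "\<Phi> G = restrict (\<lambda>r. (\<Sum>t\<in>T. G r t * v t) mod d) R" for G :: "'a \<Rightarrow> 'a \<Rightarrow> nat"
  define fib where "fib c = {G \<in> A. \<Phi> G = c}" for c
  define C where "C = R \<rightarrow>\<^sub>E {0..<d}"
  define c0 where "c0 = restrict (\<lambda>_. 0::nat) R"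
  have c0C: "c0 \<in> C" unfolding c0_def C_def using d0 by auto
  have z0nR: "z0 \<notin> R" "z0 \<in> Z" using z0 TR TZ by auto
  have fibeq: "{G \<in> A. \<forall>r\<in>R. (\<Sum>t\<in>T. G r t * v t) mod d = 0} = fib c0"
    unfolding fib_def \<Phi>_def c0_def by (auto simp: fun_eq_iff restrict_def split: if_splits)
  have phi_shift: "\<Phi> (shiftG d R z0 c G) r = ((\<Sum>t\<in>T. G r t * v t) + c r * v z0) mod d" if "r \<in> R" for c G r
    using shiftG_phi[OF fT z0 TR that] that unfolding \<Phi>_def by simp
  have ffib: "finite (fib c)" for c unfolding fib_def using fA by simp
  have eqc: "card (fib c) = card (fib c0)" if cC: "c \<in> C" for c
  proof (rule antisym)
    define c1 where "c1 r = ((d - c r) * inv) mod d" for r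
    show "card (fib c) \<le> card (fib c0)"
    proof (rule card_inj_on_le[where f="shiftG d R z0 c1"])
      show "inj_on (shiftG d R z0 c1) (fib c)"
        using shiftG_inj[OF d0, of R z0 c1 Z] by (rule inj_on_subset) (auto simp: fib_def A_def)
      show "finite (fib c0)" by (rule ffib)
      show "shiftG d R z0 c1 ` fib c \<subseteq> fib c0"
      proof safe
        fix G assume G: "G \<in> fib c"
        have GA: "G \<in> A" and PG: "\<Phi> G = c" using G by (auto simp: fib_def)
        have "\<Phi> (shiftG d R z0 c1 G) r = c0 r" for r
        proof (cases "r \<in> R")
          case True
          have "c r < d" using cC True by (auto simp: C_def)
          have "\<Phi> G r = c r" using PG by simp
          hence m: "(\<Sum>t\<in>T. G r t * v t) mod d = c r" using True by (simp add: \<Phi>_def)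
          have "\<Phi> (shiftG d R z0 c1 G) r = (c r + (d - c r)) mod d"
            unfolding phi_shift[OF True] c1_def by (rule modlem[OF inv m])
          also have "\<dots> = 0" using \<open>c r < d\<close> by simp
          finally show ?thesis using True by (simp add: c0_def)
        next
          case False thus ?thesis by (simp add: \<Phi>_def c0_def)
        qed
        thus "shiftG d R z0 c1 G \<in> fib c0"
          using shiftG_adj[of G d Z R z0 c1] GA z0nR RZ d0 by (auto simp: fib_def A_def)
      qed
    qed
  next
    define c1 where "c1 r = (c r * inv) mod d" for r
    show "card (fib c0) \<le> card (fib c)"
    proof (rule card_inj_on_le[where f="shiftG d R z0 c1"])
      show "inj_on (shiftG d R z0 c1) (fib c0)"
        using shiftG_inj[OF d0, of R z0 c1 Z] by (rule inj_on_subset) (auto simp: fib_def A_def)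
      show "finite (fib c)" by (rule ffib)
      show "shiftG d R z0 c1 ` fib c0 \<subseteq> fib c"
      proof safe
        fix G assume G: "G \<in> fib c0"
        have GA: "G \<in> A" and PG: "\<Phi> G = c0" using G by (auto simp: fib_def)
        have "\<Phi> (shiftG d R z0 c1 G) r = c r" for r
        proof (cases "r \<in> R")
          case True
          have "c r < d" using cC True by (auto simp: C_def)
          have "\<Phi> G r = c0 r" using PG by simp
          hence m: "(\<Sum>t\<in>T. G r t * v t) mod d = 0" using True by (simp add: \<Phi>_def c0_def)
          have "\<Phi> (shiftG d R z0 c1 G) r = (0 + c r) mod d"
            unfolding phi_shift[OF True] c1_def by (rule modlem[OF inv m])
          also have "\<dots> = c r" using \<open>c r < d\<close> by simp
          finally show ?thesis .
        next
          case False thus ?thesis using cC by (simp add: \<Phi>_def C_def PiE_def extensional_def)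
        qed
        thus "shiftG d R z0 c1 G \<in> fib c"
          using shiftG_adj[of G d Z R z0 c1] GA z0nR RZ d0 by (auto simp: fib_def A_def)
      qed
    qed
  qed
  have "A = (\<Union>c\<in>C. fib c)"
  proof
    show "A \<subseteq> (\<Union>c\<in>C. fib c)"
    proof
      fix G assume "G \<in> A"
      moreover have "\<Phi> G \<in> C" unfolding \<Phi>_def C_def using d0 by auto
      ultimately show "G \<in> (\<Union>c\<in>C. fib c)" by (auto simp: fib_def)
    qed
  qed (auto simp: fib_def)
  moreover have "card (\<Union>c\<in>C. fib c) = (\<Sum>c\<in>C. card (fib c))"
  proof (rule card_UN_disjoint)
    show "finite C" unfolding C_def using fR by (simp add: finite_PiE)
    show "\<forall>i\<in>C. finite (fib i)" using ffib by blast
    show "\<forall>i\<in>C. \<forall>j\<in>C. i \<noteq> j \<longrightarrow> fib i \<inter> fib j = {}" unfolding fib_def by blast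
  qed
  ultimately have "card A = (\<Sum>c\<in>C. card (fib c))" by simp
  also have "\<dots> = (\<Sum>c\<in>C. card (fib c0))" by (rule sum.cong) (auto simp: eqc)
  also have "\<dots> = card C * card (fib c0)" by simp
  also have "card C = d ^ card R" unfolding C_def using fR by (simp add: card_PiE)
  finally show ?thesis using fibeq unfolding A_def by simp
qed

definition badset :: "nat \<Rightarrow> 'a set \<Rightarrow> 'a set \<Rightarrow> nat \<Rightarrow> ('a \<Rightarrow> 'a \<Rightarrow> nat) set" where
  "badset d X Y k = {G. \<exists>S. S \<subseteq> Y \<and> card S = k \<and> (\<exists>v\<in>confs (X \<union> S) d. (\<exists>t\<in>X \<union> S. v t \<noteq> 0)
      \<and> (\<forall>r\<in>Y - S. (\<Sum>t\<in>X \<union> S. G r t * v t) mod d = 0))}"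

lemma bad_count:
  assumes pd: "prime d" and fX: "finite X" and fY: "finite Y" and XY: "X \<inter> Y = {}"
    and kn: "k \<le> card Y"
  shows "card (adj_mats d (X \<union> Y) \<inter> badset d X Y k) * d ^ (card Y - k)
     \<le> (card Y choose k) * d ^ (card X + k) * card (adj_mats d (X \<union> Y))"
proof -
  define A where "A = adj_mats d (X \<union> Y)"
  define SS where "SS = {S. S \<subseteq> Y \<and> card S = k}"
  define NZ where "NZ S = {v \<in> confs (X \<union> S) d. \<exists>t\<in>X \<union> S. v t \<noteq> 0}" for S
  define F where "F S v = {G \<in> A. \<forall>r\<in>Y - S. (\<Sum>t\<in>X \<union> S. G r t * v t) mod d = 0}" for S v
  have fSS: "finite SS" unfolding SS_def using fY by simp
  have fNZ: "finite (NZ S)" if "S \<in> SS" for S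
    using that fX fY unfolding NZ_def SS_def confs_def by (auto intro: finite_subset intro!: finite_PiE)
  have sub: "A \<inter> badset d X Y k \<subseteq> (\<Union>S\<in>SS. \<Union>v\<in>NZ S. F S v)"
    unfolding A_def badset_def SS_def NZ_def F_def by blast
  have fU: "finite (\<Union>S\<in>SS. \<Union>v\<in>NZ S. F S v)"
    using fX fY by (intro finite_subset[OF _ adj_finite[of "X \<union> Y" d]]) (auto simp: F_def A_def)
  have "card (A \<inter> badset d X Y k) \<le> card (\<Union>S\<in>SS. \<Union>v\<in>NZ S. F S v)"
    by (rule card_mono[OF fU sub])
  also have "\<dots> \<le> (\<Sum>S\<in>SS. card (\<Union>v\<in>NZ S. F S v))" by (rule card_UN_le[OF fSS])
  also have "\<dots> \<le> (\<Sum>S\<in>SS. \<Sum>v\<in>NZ S. card (F S v))"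
    by (intro sum_mono card_UN_le fNZ)
  finally have c0: "card (A \<inter> badset d X Y k) \<le> (\<Sum>S\<in>SS. \<Sum>v\<in>NZ S. card (F S v))" .
  have c1: "card (A \<inter> badset d X Y k) * d ^ (card Y - k) \<le> (\<Sum>S\<in>SS. \<Sum>v\<in>NZ S. card (F S v) * d ^ (card Y - k))"
    using mult_le_mono1[OF c0, of "d ^ (card Y - k)"] by (simp add: sum_distrib_right)
  have Fv: "card (F S v) * d ^ (card Y - k) = card A" if S: "S \<in> SS" and v: "v \<in> NZ S" for S v
  proof -
    obtain z0 where z0: "z0 \<in> X \<union> S" "v z0 \<noteq> 0" using v unfolding NZ_def by blast
    have vd: "v z0 < d" using v z0 unfolding NZ_def confs_def by auto
    have SY: "S \<subseteq> Y" "card S = k" using S unfolding SS_def by auto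
    have cR: "card (Y - S) = card Y - k" using SY fY by (simp add: card_Diff_subset finite_subset)
    have "card (F S v) * d ^ card (Y - S) = card A"
      unfolding F_def A_def
      by (rule fiber_card[OF pd _ _ _ _ _ z0(1)]) (use fX fY SY XY z0 vd finite_subset in auto)
    thus ?thesis using cR by simp
  qed
  have cNZ: "card (NZ S) \<le> d ^ (card X + k)" if S: "S \<in> SS" for S
  proof -
    have SY: "S \<subseteq> Y" "card S = k" "finite S" using S fY unfolding SS_def by (auto intro: finite_subset)
    have "card (NZ S) \<le> card (confs (X \<union> S) d)"
      using SY fX unfolding NZ_def confs_def by (intro card_mono) (auto intro!: finite_PiE)
    also have "\<dots> = d ^ card (X \<union> S)" unfolding confs_def using SY fX by (simp add: card_PiE)
    also have "card (X \<union> S) = card X + k" using SY XY fX by (subst card_Un_disjoint) auto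
    finally show ?thesis .
  qed
  have "(\<Sum>S\<in>SS. \<Sum>v\<in>NZ S. card (F S v) * d ^ (card Y - k)) = (\<Sum>S\<in>SS. card (NZ S) * card A)"
    by (intro sum.cong refl) (simp add: Fv)
  also have "\<dots> \<le> (\<Sum>S\<in>SS. d ^ (card X + k) * card A)"
    by (intro sum_mono mult_right_mono cNZ) auto
  also have "\<dots> = (card Y choose k) * d ^ (card X + k) * card A"
    unfolding SS_def using fY by (simp add: n_subsets)
  finally show ?thesis using c1 unfolding A_def by linarith
qed

definition mrg :: "'a set \<Rightarrow> ('a \<Rightarrow> nat) \<Rightarrow> ('a \<Rightarrow> nat) \<Rightarrow> 'a \<Rightarrow> nat" where
  "mrg S a k = (\<lambda>x. if x \<in> S then a x else k x)"

lemma mrg_confs: "S \<subseteq> Y \<Longrightarrow> a \<in> confs S d \<Longrightarrow> k \<in> confs (Y - S) d \<Longrightarrow> mrg S a k \<in> confs Y d"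
  unfolding confs_def mrg_def PiE_def extensional_def by (auto simp: Pi_def)

lemma confs_split:
  assumes "S \<subseteq> Y"
  shows "(\<Sum>y\<in>confs Y d. h y) = (\<Sum>a\<in>confs S d. \<Sum>k\<in>confs (Y - S) d. h (mrg S a k))"
proof -
  have "(\<Sum>y\<in>confs Y d. h y) = (\<Sum>p\<in>confs S d \<times> confs (Y - S) d. h (mrg S (fst p) (snd p)))"
  proof (rule sum.reindex_bij_witness[where i="\<lambda>p. mrg S (fst p) (snd p)" and j="\<lambda>y. (restrict y S, restrict y (Y - S))"])
    fix y assume y: "y \<in> confs Y d"
    show "mrg S (fst (restrict y S, restrict y (Y - S))) (snd (restrict y S, restrict y (Y - S))) = y"
      using y assms unfolding mrg_def confs_def PiE_def extensional_def by (auto simp: fun_eq_iff)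
    show "(restrict y S, restrict y (Y - S)) \<in> confs S d \<times> confs (Y - S) d"
      using y assms unfolding confs_def by auto
    show "h (mrg S (fst (restrict y S, restrict y (Y - S))) (snd (restrict y S, restrict y (Y - S)))) = h y"
      using y assms unfolding mrg_def confs_def PiE_def extensional_def by (auto simp: fun_eq_iff intro!: arg_cong[where f=h])
  next
    fix p assume p: "p \<in> confs S d \<times> confs (Y - S) d"
    show "(restrict (mrg S (fst p) (snd p)) S, restrict (mrg S (fst p) (snd p)) (Y - S)) = p"
      using p unfolding mrg_def confs_def PiE_def extensional_def by (cases p) (auto simp: fun_eq_iff)
    show "mrg S (fst p) (snd p) \<in> confs Y d"
      using p assms by (cases p) (auto intro: mrg_confs)
  qed
  also have "\<dots> = (\<Sum>a\<in>confs S d. \<Sum>k\<in>confs (Y - S) d. h (mrg S a k))"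
    by (simp add: sum.cartesian_product split_def)
  finally show ?thesis .
qed

lemma prod_sum_confs:
  fixes g :: "'a \<Rightarrow> nat \<Rightarrow> 'c::comm_semiring_1"
  assumes "finite R"
  shows "(\<Sum>k\<in>confs R d. \<Prod>r\<in>R. g r (k r)) = (\<Prod>r\<in>R. \<Sum>t\<in>{0..<d}. g r t)"
  unfolding confs_def by (rule prod_sum_PiE[symmetric]) (use assms in auto)

lemma root_sum:
  fixes d :: nat and D :: int
  assumes "d > 0"
  shows "(\<Sum>t\<in>{0..<d}. exp (2 * pi * \<i> * of_nat t * of_int D / of_nat d)) = (if int d dvd D then of_nat d else (0::complex))"
proof -
  define \<omega> where "\<omega> = exp (2 * pi * \<i> * of_int D / of_nat d)"
  have e: "exp (2 * pi * \<i> * of_nat t * of_int D / of_nat d) = \<omega> ^ t" for t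
    unfolding \<omega>_def by (subst exp_of_nat_mult[symmetric]) (simp add: mult_ac)
  have wd: "\<omega> ^ d = 1"
  proof -
    have "\<omega> ^ d = exp (of_nat d * (2 * pi * \<i> * of_int D / of_nat d))"
      unfolding \<omega>_def by (rule exp_of_nat_mult[symmetric])
    also have "\<dots> = exp (2 * pi * \<i> * of_int D)" using assms by simp
    also have "\<dots> = 1" by (simp add: exp_eq_1)
    finally show ?thesis .
  qed
  show ?thesis
  proof (cases "int d dvd D")
    case True
    then obtain q where q: "D = int d * q" by blast
    have "\<omega> = exp (2 * pi * \<i> * of_int q)" unfolding \<omega>_def q using assms by (simp add: mult.assoc)
    also have "\<dots> = 1" by (simp add: exp_eq_1)
    finally have "\<omega> = 1" .
    have "exp (2 * pi * \<i> * of_nat t * of_int D / of_nat d) = 1" for t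
      using e[of t] \<open>\<omega> = 1\<close> by simp
    hence "(\<Sum>t\<in>{0..<d}. exp (2 * pi * \<i> * of_nat t * of_int D / of_nat d)) = (\<Sum>t\<in>{0..<d}. (1::complex))"
      by (intro sum.cong refl)
    thus ?thesis using True by simp
  next
    case False
    have "\<omega> \<noteq> 1"
    proof
      assume "\<omega> = 1"
      then obtain n :: int where n: "Im (2 * pi * \<i> * of_int D / of_nat d) = of_int (2 * n) * pi"
        unfolding \<omega>_def exp_eq_1 by blast
      hence "2 * pi * of_int D / real d = of_int (2 * n) * pi" by simp
      hence "real_of_int D = real d * of_int n" using assms by (simp add: field_simps)
      hence "D = int d * n" by (metis of_int_eq_iff of_int_mult of_int_of_nat_eq)
      thus False using False by simp
    qed
    hence "(\<Sum>t\<in>{0..<d}. \<omega> ^ t) = 0"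
      using wd by (simp add: geometric_sum atLeast0LessThan)
    moreover have "(\<Sum>t\<in>{0..<d}. exp (2 * pi * \<i> * of_nat t * of_int D / of_nat d)) = (\<Sum>t\<in>{0..<d}. \<omega> ^ t)"
      by (rule sum.cong[OF refl e])
    ultimately show ?thesis using False by simp
  qed
qed

definition QQ :: "('a \<Rightarrow> 'a \<Rightarrow> nat) \<Rightarrow> 'a set \<Rightarrow> ('a \<Rightarrow> nat) \<Rightarrow> nat" where
  "QQ G A z = (\<Sum>x\<in>A. \<Sum>y\<in>A. z x * G x y * z y)"

definition EE :: "('a \<Rightarrow> 'a \<Rightarrow> nat) \<Rightarrow> 'a set \<Rightarrow> ('a \<Rightarrow> nat) \<Rightarrow> 'a \<Rightarrow> nat" where
  "EE G T z r = (\<Sum>t\<in>T. G r t * z t)"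

lemma QQ_split:
  assumes fT: "finite T" and fR: "finite R" and TR: "T \<inter> R = {}" and sym: "\<And>x y. G x y = G y x"
  shows "QQ G (T \<union> R) z = QQ G T z + 2 * (\<Sum>r\<in>R. z r * EE G T z r) + QQ G R z"
proof -
  have c1: "(\<Sum>x\<in>T. \<Sum>y\<in>R. z x * G x y * z y) = (\<Sum>r\<in>R. z r * EE G T z r)"
  proof -
    have "(\<Sum>x\<in>T. \<Sum>y\<in>R. z x * G x y * z y) = (\<Sum>y\<in>R. \<Sum>x\<in>T. z x * G x y * z y)"
      by (rule sum.swap)
    also have "\<dots> = (\<Sum>r\<in>R. z r * EE G T z r)"
      unfolding EE_def by (simp add: sum_distrib_left mult_ac sym)
    finally show ?thesis .
  qed
  have c2: "(\<Sum>x\<in>R. \<Sum>y\<in>T. z x * G x y * z y) = (\<Sum>r\<in>R. z r * EE G T z r)"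
    unfolding EE_def by (simp add: sum_distrib_left mult_ac)
  have "QQ G (T \<union> R) z = (\<Sum>x\<in>T. \<Sum>y\<in>T \<union> R. z x * G x y * z y) + (\<Sum>x\<in>R. \<Sum>y\<in>T \<union> R. z x * G x y * z y)"
    unfolding QQ_def using fT fR TR by (rule sum.union_disjoint)
  also have "\<dots> = ((\<Sum>x\<in>T. \<Sum>y\<in>T. z x * G x y * z y) + (\<Sum>x\<in>T. \<Sum>y\<in>R. z x * G x y * z y))
       + ((\<Sum>x\<in>R. \<Sum>y\<in>T. z x * G x y * z y) + (\<Sum>x\<in>R. \<Sum>y\<in>R. z x * G x y * z y))"
    using fT fR TR by (simp add: sum.union_disjoint sum.distrib)
  finally show ?thesis unfolding c1 c2 QQ_def by simp
qed

lemma QQ_cong: "(\<And>x. x \<in> A \<Longrightarrow> z x = z' x) \<Longrightarrow> QQ G A z = QQ G A z'"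
  unfolding QQ_def by (intro sum.cong refl) auto

lemma EE_cong: "(\<And>x. x \<in> T \<Longrightarrow> z x = z' x) \<Longrightarrow> EE G T z r = EE G T z' r"
  unfolding EE_def by (intro sum.cong refl) auto

lemma graph_code_alt:
  "graph_code d X Y G y j = complex_of_real (1 / sqrt (real d) ^ card Y) *
     exp (\<i> * complex_of_real (pi / real d) * of_nat (QQ G (X \<union> Y) (\<lambda>x. if x \<in> X then j x else y x)))"
  unfolding graph_code_def QQ_def Let_def by simp

lemma gc_mrg:
  fixes j a k :: "'a \<Rightarrow> nat" and G :: "'a \<Rightarrow> 'a \<Rightarrow> nat"
  assumes fX: "finite X" and fY: "finite Y" and XY: "X \<inter> Y = {}" and SY: "S \<subseteq> Y"
    and sym: "\<And>x y. G x y = G y x"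
  defines "w \<equiv> (\<lambda>x. if x \<in> X then j x else a x)"
  shows "graph_code d X Y G (mrg S a k) j = complex_of_real (1 / sqrt (real d) ^ card Y) *
     exp (\<i> * complex_of_real (pi / real d) *
       (of_nat (QQ G (X \<union> S) w) + 2 * (\<Sum>r\<in>Y - S. of_nat (k r) * of_nat (EE G (X \<union> S) w r)) + of_nat (QQ G (Y - S) k)))"
proof -
  define z where "z = (\<lambda>x. if x \<in> X then j x else mrg S a k x)"
  have U: "X \<union> Y = (X \<union> S) \<union> (Y - S)" using SY by auto
  have fS: "finite S" using SY fY finite_subset by blast
  have "QQ G (X \<union> Y) z = QQ G (X \<union> S) z + 2 * (\<Sum>r\<in>Y - S. z r * EE G (X \<union> S) z r) + QQ G (Y - S) z"
    unfolding U by (rule QQ_split) (use fX fY fS XY sym in auto)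
  also have "QQ G (X \<union> S) z = QQ G (X \<union> S) w"
    by (rule QQ_cong) (auto simp: z_def w_def mrg_def)
  also have "QQ G (Y - S) z = QQ G (Y - S) k"
    by (rule QQ_cong) (use XY in \<open>auto simp: z_def mrg_def\<close>)
  also have "(\<Sum>r\<in>Y - S. z r * EE G (X \<union> S) z r) = (\<Sum>r\<in>Y - S. k r * EE G (X \<union> S) w r)"
  proof (intro sum.cong refl)
    fix r assume r: "r \<in> Y - S"
    have "z r = k r" using r XY by (auto simp: z_def mrg_def)
    moreover have "EE G (X \<union> S) z r = EE G (X \<union> S) w r"
      by (rule EE_cong) (auto simp: z_def w_def mrg_def)
    ultimately show "z r * EE G (X \<union> S) z r = k r * EE G (X \<union> S) w r" by simp
  qed
  finally have Q: "QQ G (X \<union> Y) z = QQ G (X \<union> S) w + 2 * (\<Sum>r\<in>Y - S. k r * EE G (X \<union> S) w r) + QQ G (Y - S) k" .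
  show ?thesis unfolding graph_code_alt z_def[symmetric] Q by simp
qed

lemma gc_pair:
  fixes j a j' a' k :: "'a \<Rightarrow> nat" and G :: "'a \<Rightarrow> 'a \<Rightarrow> nat" and d :: nat and X Y S :: "'a set"
  assumes fX: "finite X" and fY: "finite Y" and XY: "X \<inter> Y = {}" and SY: "S \<subseteq> Y"
    and sym: "\<And>x y. G x y = G y x"
  defines "w \<equiv> (\<lambda>x. if x \<in> X then j x else a x)" and "w' \<equiv> (\<lambda>x. if x \<in> X then j' x else a' x)"
    and "c \<equiv> \<i> * complex_of_real (pi / real d)"
    and "\<kappa> \<equiv> 1 / sqrt (real d) ^ card Y"
  shows "cnj (graph_code d X Y G (mrg S a' k) j') * graph_code d X Y G (mrg S a k) j
     = complex_of_real (\<kappa> * \<kappa>) * exp (c * (of_nat (QQ G (X \<union> S) w) - of_nat (QQ G (X \<union> S) w')))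
       * (\<Prod>r\<in>Y - S. exp (2 * c * of_nat (k r) * (of_nat (EE G (X \<union> S) w r) - of_nat (EE G (X \<union> S) w' r))))"
proof -
  define A where "A = (of_nat (QQ G (X \<union> S) w) + 2 * (\<Sum>r\<in>Y - S. of_nat (k r) * of_nat (EE G (X \<union> S) w r)) + of_nat (QQ G (Y - S) k) :: complex)"
  define A' where "A' = (of_nat (QQ G (X \<union> S) w') + 2 * (\<Sum>r\<in>Y - S. of_nat (k r) * of_nat (EE G (X \<union> S) w' r)) + of_nat (QQ G (Y - S) k) :: complex)"
  have g1: "graph_code d X Y G (mrg S a k) j = complex_of_real \<kappa> * exp (c * A)"
    unfolding A_def c_def \<kappa>_def w_def by (rule gc_mrg[OF fX fY XY SY sym])
  have g2: "graph_code d X Y G (mrg S a' k) j' = complex_of_real \<kappa> * exp (c * A')"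
    unfolding A'_def c_def \<kappa>_def w'_def by (rule gc_mrg[OF fX fY XY SY sym])
  have cA': "cnj A' = A'" unfolding A'_def by simp
  have cc: "cnj c = - c" unfolding c_def by simp
  have "cnj (graph_code d X Y G (mrg S a' k) j') * graph_code d X Y G (mrg S a k) j
      = complex_of_real (\<kappa> * \<kappa>) * exp (c * A - c * A')"
    unfolding g1 g2 by (simp add: exp_cnj cA' cc exp_diff exp_minus field_simps)
  also have "c * A - c * A' = c * (of_nat (QQ G (X \<union> S) w) - of_nat (QQ G (X \<union> S) w'))
      + (\<Sum>r\<in>Y - S. 2 * c * of_nat (k r) * (of_nat (EE G (X \<union> S) w r) - of_nat (EE G (X \<union> S) w' r)))"
    unfolding A_def A'_def by (simp add: algebra_simps sum_distrib_left sum_subtractf)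
  also have "exp \<dots> = exp (c * (of_nat (QQ G (X \<union> S) w) - of_nat (QQ G (X \<union> S) w')))
      * (\<Prod>r\<in>Y - S. exp (2 * c * of_nat (k r) * (of_nat (EE G (X \<union> S) w r) - of_nat (EE G (X \<union> S) w' r))))"
    using fY by (simp add: exp_add exp_sum)
  finally show ?thesis by (simp add: mult.assoc)
qed

lemma inner_sum:
  fixes j a j' a' :: "'a \<Rightarrow> nat" and G :: "'a \<Rightarrow> 'a \<Rightarrow> nat" and d :: nat and X Y S :: "'a set"
  assumes fX: "finite X" and fY: "finite Y" and XY: "X \<inter> Y = {}" and SY: "S \<subseteq> Y"
    and sym: "\<And>x y. G x y = G y x" and d0: "d > 0"
  defines "w \<equiv> (\<lambda>x. if x \<in> X then j x else a x)" and "w' \<equiv> (\<lambda>x. if x \<in> X then j' x else a' x)"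
    and "c \<equiv> \<i> * complex_of_real (pi / real d)"
    and "\<kappa> \<equiv> 1 / sqrt (real d) ^ card Y"
  shows "(\<Sum>k\<in>confs (Y - S) d. cnj (graph_code d X Y G (mrg S a' k) j') * graph_code d X Y G (mrg S a k) j)
     = complex_of_real (\<kappa> * \<kappa>) * exp (c * (of_nat (QQ G (X \<union> S) w) - of_nat (QQ G (X \<union> S) w')))
       * (\<Prod>r\<in>Y - S. if int d dvd (int (EE G (X \<union> S) w r) - int (EE G (X \<union> S) w' r)) then of_nat d else 0)"
proof -
  define D where "D r = int (EE G (X \<union> S) w r) - int (EE G (X \<union> S) w' r)" for r
  define g where "g r t = exp (2 * c * of_nat t * (of_nat (EE G (X \<union> S) w r) - of_nat (EE G (X \<union> S) w' r)))" for r t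
  have fR: "finite (Y - S)" using fY by simp
  have "(\<Sum>k\<in>confs (Y - S) d. cnj (graph_code d X Y G (mrg S a' k) j') * graph_code d X Y G (mrg S a k) j)
      = (\<Sum>k\<in>confs (Y - S) d. complex_of_real (\<kappa> * \<kappa>) * exp (c * (of_nat (QQ G (X \<union> S) w) - of_nat (QQ G (X \<union> S) w')))
          * (\<Prod>r\<in>Y - S. g r (k r)))"
    unfolding g_def c_def \<kappa>_def w_def w'_def by (intro sum.cong refl gc_pair[OF fX fY XY SY sym])
  also have "\<dots> = complex_of_real (\<kappa> * \<kappa>) * exp (c * (of_nat (QQ G (X \<union> S) w) - of_nat (QQ G (X \<union> S) w')))
          * (\<Sum>k\<in>confs (Y - S) d. \<Prod>r\<in>Y - S. g r (k r))"
    by (simp add: sum_distrib_left)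
  also have "(\<Sum>k\<in>confs (Y - S) d. \<Prod>r\<in>Y - S. g r (k r)) = (\<Prod>r\<in>Y - S. \<Sum>t\<in>{0..<d}. g r t)"
    by (rule prod_sum_confs[OF fR])
  also have "\<dots> = (\<Prod>r\<in>Y - S. if int d dvd D r then of_nat d else 0)"
  proof (intro prod.cong refl)
    fix r
    have "g r t = exp (2 * pi * \<i> * of_nat t * of_int (D r) / of_nat d)" for t
      unfolding g_def D_def c_def using d0 by (simp add: field_simps)
    hence "(\<Sum>t\<in>{0..<d}. g r t) = (\<Sum>t\<in>{0..<d}. exp (2 * pi * \<i> * of_nat t * of_int (D r) / of_nat d))"
      by simp
    also have "\<dots> = (if int d dvd D r then of_nat d else 0)" by (rule root_sum[OF d0])
    finally show "(\<Sum>t\<in>{0..<d}. g r t) = (if int d dvd D r then of_nat d else 0)" .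
  qed
  finally show ?thesis unfolding D_def .
qed

lemma int_mod_eq_lt:
  fixes a b d :: nat
  assumes "(int a - int b) mod int d = 0" "a < d" "b < d"
  shows "a = b"
proof (rule ccontr)
  assume ne: "a \<noteq> b"
  have "int d dvd (int a - int b)" using assms(1) by (simp add: mod_eq_0_iff_dvd)
  hence "\<bar>int d\<bar> \<le> \<bar>int a - int b\<bar>" using ne by (intro dvd_imp_le_int) auto
  thus False using assms(2,3) by linarith
qed

lemma good_eq:
  fixes j a j' a' :: "'a \<Rightarrow> nat" and G :: "'a \<Rightarrow> 'a \<Rightarrow> nat" and d :: nat and X Y S :: "'a set"
  assumes d0: "d > 0" and fX: "finite X" and fS: "finite S" and XY: "X \<inter> Y = {}" and SY: "S \<subseteq> Y"
    and good: "\<forall>v\<in>confs (X \<union> S) d. (\<exists>t\<in>X \<union> S. v t \<noteq> 0) \<longrightarrow>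
                 \<not> (\<forall>r\<in>Y - S. (\<Sum>t\<in>X \<union> S. G r t * v t) mod d = 0)"
    and j: "j \<in> confs X d" and j': "j' \<in> confs X d" and a: "a \<in> confs S d" and a': "a' \<in> confs S d"
  defines "w \<equiv> (\<lambda>x. if x \<in> X then j x else a x)" and "w' \<equiv> (\<lambda>x. if x \<in> X then j' x else a' x)"
  assumes dv: "\<forall>r\<in>Y - S. int d dvd (int (EE G (X \<union> S) w r) - int (EE G (X \<union> S) w' r))"
  shows "j = j' \<and> a = a'"
proof -
  define T where "T = X \<union> S"
  have fT: "finite T" unfolding T_def using fX fS by simp
  have wd: "w t < d" "w' t < d" if "t \<in> T" for t
    using that j j' a a' unfolding T_def w_def w'_def confs_def by auto
  define v where "v = restrict (\<lambda>t. nat ((int (w t) - int (w' t)) mod int d)) T"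
  have vc: "v \<in> confs T d"
    unfolding v_def confs_def using d0 by (auto simp: nat_less_iff)
  have vr: "(\<Sum>t\<in>T. G r t * v t) mod d = 0" if r: "r \<in> Y - S" for r
  proof -
    have "int ((\<Sum>t\<in>T. G r t * v t) mod d) = (\<Sum>t\<in>T. int (G r t) * ((int (w t) - int (w' t)) mod int d)) mod int d"
      unfolding zmod_int v_def using d0 by (simp add: of_nat_sum)
    also have "\<dots> = (\<Sum>t\<in>T. (int (G r t) * ((int (w t) - int (w' t)) mod int d)) mod int d) mod int d"
      by (simp add: mod_sum_eq)
    also have "\<dots> = (\<Sum>t\<in>T. (int (G r t) * (int (w t) - int (w' t))) mod int d) mod int d"
      by (simp add: mod_mult_right_eq)
    also have "\<dots> = (\<Sum>t\<in>T. int (G r t) * (int (w t) - int (w' t))) mod int d"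
      by (simp add: mod_sum_eq)
    also have "(\<Sum>t\<in>T. int (G r t) * (int (w t) - int (w' t))) = int (EE G T w r) - int (EE G T w' r)"
      unfolding EE_def by (simp add: of_nat_sum right_diff_distrib sum_subtractf)
    also have "\<dots> mod int d = 0" using dv r unfolding T_def by (simp add: mod_eq_0_iff_dvd)
    finally show ?thesis by simp
  qed
  have v0: "\<forall>t\<in>T. v t = 0" using good vc vr unfolding T_def by blast
  have weq: "w t = w' t" if "t \<in> T" for t
  proof -
    have "nat ((int (w t) - int (w' t)) mod int d) = 0" using v0 that unfolding v_def by auto
    hence "(int (w t) - int (w' t)) mod int d = 0" using d0
      by (metis nat_0_iff pos_mod_sign of_nat_0_less_iff antisym)
    thus ?thesis using wd[OF that] by (rule int_mod_eq_lt)
  qed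
  have "j = j'"
  proof
    fix x show "j x = j' x"
    proof (cases "x \<in> X")
      case True thus ?thesis using weq[of x] unfolding T_def w_def w'_def by auto
    next
      case False thus ?thesis using j j' unfolding confs_def PiE_def extensional_def by auto
    qed
  qed
  moreover have "a = a'"
  proof
    fix x show "a x = a' x"
    proof (cases "x \<in> S")
      case True
      hence "x \<notin> X" using XY SY by auto
      thus ?thesis using weq[of x] True unfolding T_def w_def w'_def by auto
    next
      case False thus ?thesis using a a' unfolding confs_def PiE_def extensional_def by auto
    qed
  qed
  ultimately show ?thesis ..
qed

definition Lm :: "nat \<Rightarrow> 'a set \<Rightarrow> 'a set \<Rightarrow> ('a \<Rightarrow> 'a \<Rightarrow> nat) \<Rightarrow> (('a \<Rightarrow> nat) \<Rightarrow> ('a \<Rightarrow> nat) \<Rightarrow> complex)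
    \<Rightarrow> ('a \<Rightarrow> nat) \<Rightarrow> ('a \<Rightarrow> nat) \<Rightarrow> complex" where
  "Lm d X Y G M j' j = (\<Sum>y'\<in>confs Y d. \<Sum>y\<in>confs Y d.
      cnj (graph_code d X Y G y' j') * M y' y * graph_code d X Y G y j)"

lemma tensor_split:
  assumes fY: "finite Y" and SY: "S \<subseteq> Y"
    and Cid: "\<forall>s\<in>Y - S. \<forall>p<d. \<forall>q<d. C s p q = (if p = q then 1 else 0)"
    and k: "k \<in> confs (Y - S) d" and k': "k' \<in> confs (Y - S) d"
  shows "tensor_op Y C (mrg S a' k') (mrg S a k) = (\<Prod>s\<in>S. C s (a' s) (a s)) * (if k' = k then 1 else 0)"
proof -
  have fS: "finite S" using fY SY finite_subset by blast
  have Y: "Y = S \<union> (Y - S)" using SY by auto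
  have "tensor_op Y C (mrg S a' k') (mrg S a k) = (\<Prod>s\<in>S. C s (mrg S a' k' s) (mrg S a k s)) * (\<Prod>s\<in>Y - S. C s (mrg S a' k' s) (mrg S a k s))"
    unfolding tensor_op_def by (subst Y, rule prod.union_disjoint) (use fS fY in auto)
  also have "(\<Prod>s\<in>S. C s (mrg S a' k' s) (mrg S a k s)) = (\<Prod>s\<in>S. C s (a' s) (a s))"
    by (intro prod.cong refl) (simp add: mrg_def)
  also have "(\<Prod>s\<in>Y - S. C s (mrg S a' k' s) (mrg S a k s)) = (\<Prod>s\<in>Y - S. if k' s = k s then 1 else 0)"
  proof (intro prod.cong refl)
    fix s assume s: "s \<in> Y - S"
    have "k s < d" "k' s < d" using k k' s unfolding confs_def by auto
    thus "C s (mrg S a' k' s) (mrg S a k s) = (if k' s = k s then 1 else 0)"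
      using Cid s by (simp add: mrg_def)
  qed
  also have "(\<Prod>s\<in>Y - S. if k' s = k s then 1 else 0) = (if k' = k then 1 else (0::complex))"
  proof (cases "k' = k")
    case True thus ?thesis by simp
  next
    case False
    then obtain s where "k' s \<noteq> k s" by auto
    moreover have "s \<in> Y - S"
      using k k' \<open>k' s \<noteq> k s\<close> by (metis DiffI PiE_arb confs_def)
    ultimately show ?thesis using False fY by (auto intro!: prod_zero)
  qed
  finally show ?thesis .
qed

lemma Lm_tensor:
  fixes G :: "'a \<Rightarrow> 'a \<Rightarrow> nat" and d :: nat and X Y S :: "'a set"
  assumes fX: "finite X" and fY: "finite Y" and XY: "X \<inter> Y = {}" and SY: "S \<subseteq> Y"
    and sym: "\<And>x y. G x y = G y x" and d0: "d > 0"
    and good: "\<forall>v\<in>confs (X \<union> S) d. (\<exists>t\<in>X \<union> S. v t \<noteq> 0) \<longrightarrow>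
                 \<not> (\<forall>r\<in>Y - S. (\<Sum>t\<in>X \<union> S. G r t * v t) mod d = 0)"
    and Cid: "\<forall>s\<in>Y - S. \<forall>p<d. \<forall>q<d. C s p q = (if p = q then 1 else 0)"
  shows "\<exists>\<omega>. \<forall>j'\<in>confs X d. \<forall>j\<in>confs X d. Lm d X Y G (tensor_op Y C) j' j = (if j' = j then \<omega> else 0)"
proof -
  define R where "R = Y - S"
  define \<kappa> where "\<kappa> = 1 / sqrt (real d) ^ card Y"
  define K where "K = complex_of_real (\<kappa> * \<kappa>) * of_nat d ^ card R"
  define P where "P a' a = (\<Prod>s\<in>S. C s (a' s) (a s))" for a' a :: "'a \<Rightarrow> nat"
  define V where "V = graph_code d X Y G"
  have fS: "finite S" using fY SY finite_subset by blast
  have fR: "finite R" unfolding R_def using fY by simp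
  have fcS: "finite (confs S d)" and fcR: "finite (confs R d)"
    unfolding confs_def using fS fR by (auto intro!: finite_PiE)
  have inner: "(\<Sum>k\<in>confs R d. cnj (V (mrg S a' k) j') * V (mrg S a k) j) = (if a' = a \<and> j' = j then K else 0)"
    if j: "j \<in> confs X d" and j': "j' \<in> confs X d" and a: "a \<in> confs S d" and a': "a' \<in> confs S d" for j j' a a'
  proof -
    define w where "w = (\<lambda>x. if x \<in> X then j x else a x)"
    define w' where "w' = (\<lambda>x. if x \<in> X then j' x else a' x)"
    have "(\<Sum>k\<in>confs R d. cnj (V (mrg S a' k) j') * V (mrg S a k) j)
       = complex_of_real (\<kappa> * \<kappa>) * exp (\<i> * complex_of_real (pi / real d) * (of_nat (QQ G (X \<union> S) w) - of_nat (QQ G (X \<union> S) w')))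
       * (\<Prod>r\<in>Y - S. if int d dvd (int (EE G (X \<union> S) w r) - int (EE G (X \<union> S) w' r)) then of_nat d else 0)"
      unfolding V_def R_def \<kappa>_def w_def w'_def by (rule inner_sum[OF fX fY XY SY sym d0])
    also have "\<dots> = (if a' = a \<and> j' = j then K else 0)"
    proof (cases "a' = a \<and> j' = j")
      case True
      have "w' = w" unfolding w_def w'_def using True by auto
      thus ?thesis using True fR by (simp add: K_def R_def)
    next
      case False
      have "\<not> (\<forall>r\<in>Y - S. int d dvd (int (EE G (X \<union> S) w r) - int (EE G (X \<union> S) w' r)))"
        using good_eq[OF d0 fX fS XY SY good j j' a a'] False unfolding w_def w'_def by blast
      then obtain r where "r \<in> Y - S" "\<not> int d dvd (int (EE G (X \<union> S) w r) - int (EE G (X \<union> S) w' r))" by blast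
      hence "(\<Prod>r\<in>Y - S. if int d dvd (int (EE G (X \<union> S) w r) - int (EE G (X \<union> S) w' r)) then of_nat d else (0::complex)) = 0"
        using fY by (intro prod_zero) auto
      thus ?thesis using False by auto
    qed
    finally show ?thesis .
  qed
  define \<omega> where "\<omega> = (\<Sum>a\<in>confs S d. P a a * K)"
  show ?thesis
  proof (intro exI ballI)
    fix j' j assume j': "j' \<in> confs X d" and j: "j \<in> confs X d"
    have "Lm d X Y G (tensor_op Y C) j' j = (\<Sum>a'\<in>confs S d. \<Sum>k'\<in>confs R d. \<Sum>a\<in>confs S d. \<Sum>k\<in>confs R d.
        cnj (V (mrg S a' k') j') * tensor_op Y C (mrg S a' k') (mrg S a k) * V (mrg S a k) j)"
      unfolding Lm_def V_def R_def by (simp only: confs_split[OF SY])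
    also have "\<dots> = (\<Sum>a'\<in>confs S d. \<Sum>a\<in>confs S d. P a' a * (\<Sum>k\<in>confs R d. cnj (V (mrg S a' k) j') * V (mrg S a k) j))"
    proof (rule sum.cong[OF refl])
      fix a' assume a': "a' \<in> confs S d"
      have "(\<Sum>k'\<in>confs R d. \<Sum>a\<in>confs S d. \<Sum>k\<in>confs R d.
              cnj (V (mrg S a' k') j') * tensor_op Y C (mrg S a' k') (mrg S a k) * V (mrg S a k) j)
          = (\<Sum>k'\<in>confs R d. \<Sum>a\<in>confs S d. \<Sum>k\<in>confs R d.
              (if k' = k then P a' a * (cnj (V (mrg S a' k') j') * V (mrg S a k) j) else 0))"
        by (intro sum.cong refl) (auto simp: tensor_split[OF fY SY Cid] P_def R_def)
      also have "\<dots> = (\<Sum>k'\<in>confs R d. \<Sum>a\<in>confs S d. P a' a * (cnj (V (mrg S a' k') j') * V (mrg S a k') j))"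
        using fcR by (intro sum.cong refl) (simp add: sum.delta)
      also have "\<dots> = (\<Sum>a\<in>confs S d. \<Sum>k'\<in>confs R d. P a' a * (cnj (V (mrg S a' k') j') * V (mrg S a k') j))"
        by (rule sum.swap)
      also have "\<dots> = (\<Sum>a\<in>confs S d. P a' a * (\<Sum>k\<in>confs R d. cnj (V (mrg S a' k) j') * V (mrg S a k) j))"
        by (simp add: sum_distrib_left)
      finally show "(\<Sum>k'\<in>confs R d. \<Sum>a\<in>confs S d. \<Sum>k\<in>confs R d.
              cnj (V (mrg S a' k') j') * tensor_op Y C (mrg S a' k') (mrg S a k) * V (mrg S a k) j)
          = (\<Sum>a\<in>confs S d. P a' a * (\<Sum>k\<in>confs R d. cnj (V (mrg S a' k) j') * V (mrg S a k) j))" .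
    qed
    also have "\<dots> = (\<Sum>a'\<in>confs S d. \<Sum>a\<in>confs S d. if a' = a then (if j' = j then P a' a * K else 0) else 0)"
      using inner[OF j j'] by (intro sum.cong refl) auto
    also have "\<dots> = (\<Sum>a'\<in>confs S d. if j' = j then P a' a' * K else 0)"
      using fcS by (intro sum.cong refl) (simp add: sum.delta)
    also have "\<dots> = (if j' = j then \<omega> else 0)" unfolding \<omega>_def by simp
    finally show "Lm d X Y G (tensor_op Y C) j' j = (if j' = j then \<omega> else 0)" .
  qed
qed

lemma hinner_Lm:
  assumes fX: "finite X" and fY: "finite Y"
    and L: "\<forall>j'\<in>confs X d. \<forall>j\<in>confs X d. Lm d X Y G M j' j = (if j' = j then \<omega> else 0)"
  shows "hinner Y d (apply_code d X Y G \<phi>1) (op_apply Y d M (apply_code d X Y G \<phi>2)) = hinner X d \<phi>1 \<phi>2 * \<omega>"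
proof -
  define V where "V = graph_code d X Y G"
  define cX where "cX = confs X d"
  define cY where "cY = confs Y d"
  have fcX: "finite cX" unfolding cX_def confs_def using fX by (auto intro!: finite_PiE)
  have "hinner Y d (apply_code d X Y G \<phi>1) (op_apply Y d M (apply_code d X Y G \<phi>2))
     = (\<Sum>y'\<in>cY. \<Sum>y\<in>cY. \<Sum>j\<in>cX. \<Sum>j'\<in>cX. cnj (\<phi>1 j') * \<phi>2 j * (cnj (V y' j') * M y' y * V y j))"
    unfolding hinner_def op_apply_def apply_code_def V_def[symmetric] cX_def[symmetric] cY_def[symmetric]
    by (simp add: sum_distrib_left sum_distrib_right mult_ac)
  also have "\<dots> = (\<Sum>y'\<in>cY. \<Sum>y\<in>cY. \<Sum>j'\<in>cX. \<Sum>j\<in>cX. cnj (\<phi>1 j') * \<phi>2 j * (cnj (V y' j') * M y' y * V y j))"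
    by (rule sum.cong[OF refl], rule sum.cong[OF refl], rule sum.swap)
  also have "\<dots> = (\<Sum>y'\<in>cY. \<Sum>j'\<in>cX. \<Sum>y\<in>cY. \<Sum>j\<in>cX. cnj (\<phi>1 j') * \<phi>2 j * (cnj (V y' j') * M y' y * V y j))"
    by (rule sum.cong[OF refl], rule sum.swap)
  also have "\<dots> = (\<Sum>j'\<in>cX. \<Sum>y'\<in>cY. \<Sum>y\<in>cY. \<Sum>j\<in>cX. cnj (\<phi>1 j') * \<phi>2 j * (cnj (V y' j') * M y' y * V y j))"
    by (rule sum.swap)
  also have "\<dots> = (\<Sum>j'\<in>cX. \<Sum>y'\<in>cY. \<Sum>j\<in>cX. \<Sum>y\<in>cY. cnj (\<phi>1 j') * \<phi>2 j * (cnj (V y' j') * M y' y * V y j))"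
    by (rule sum.cong[OF refl], rule sum.cong[OF refl], rule sum.swap)
  also have "\<dots> = (\<Sum>j'\<in>cX. \<Sum>j\<in>cX. \<Sum>y'\<in>cY. \<Sum>y\<in>cY. cnj (\<phi>1 j') * \<phi>2 j * (cnj (V y' j') * M y' y * V y j))"
    by (rule sum.cong[OF refl], rule sum.swap)
  also have "\<dots> = (\<Sum>j'\<in>cX. \<Sum>j\<in>cX. cnj (\<phi>1 j') * \<phi>2 j * Lm d X Y G M j' j)"
    unfolding Lm_def V_def cY_def by (simp add: sum_distrib_left)
  also have "\<dots> = (\<Sum>j'\<in>cX. \<Sum>j\<in>cX. if j' = j then cnj (\<phi>1 j') * \<phi>2 j * \<omega> else 0)"
    using L unfolding cX_def by (intro sum.cong refl) auto
  also have "\<dots> = (\<Sum>j'\<in>cX. cnj (\<phi>1 j') * \<phi>2 j' * \<omega>)"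
    using fcX by (intro sum.cong refl) (simp add: sum.delta)
  also have "\<dots> = hinner X d \<phi>1 \<phi>2 * \<omega>"
    unfolding hinner_def cX_def by (simp add: sum_distrib_right)
  finally show ?thesis .
qed

lemma Lm_lin:
  assumes "finite I"
  shows "Lm d X Y G (\<lambda>a b. \<Sum>i\<in>I. c i * M i a b) j' j = (\<Sum>i\<in>I. c i * Lm d X Y G (M i) j' j)"
proof -
  define V where "V = graph_code d X Y G"
  have "Lm d X Y G (\<lambda>a b. \<Sum>i\<in>I. c i * M i a b) j' j
      = (\<Sum>y'\<in>confs Y d. \<Sum>y\<in>confs Y d. \<Sum>i\<in>I. c i * (cnj (V y' j') * M i y' y * V y j))"
    unfolding Lm_def V_def by (simp add: sum_distrib_left sum_distrib_right mult_ac)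
  also have "\<dots> = (\<Sum>y'\<in>confs Y d. \<Sum>i\<in>I. \<Sum>y\<in>confs Y d. c i * (cnj (V y' j') * M i y' y * V y j))"
    by (rule sum.cong[OF refl], rule sum.swap)
  also have "\<dots> = (\<Sum>i\<in>I. \<Sum>y'\<in>confs Y d. \<Sum>y\<in>confs Y d. c i * (cnj (V y' j') * M i y' y * V y j))"
    by (rule sum.swap)
  also have "\<dots> = (\<Sum>i\<in>I. c i * Lm d X Y G (M i) j' j)"
    unfolding Lm_def V_def by (simp add: sum_distrib_left)
  finally show ?thesis .
qed

definition Cm :: "nat \<Rightarrow> ('a \<Rightarrow> nat \<Rightarrow> nat \<Rightarrow> complex) \<Rightarrow> ('a \<Rightarrow> nat \<Rightarrow> nat \<Rightarrow> complex) \<Rightarrow> 'a \<Rightarrow> nat \<Rightarrow> nat \<Rightarrow> complex" where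
  "Cm d A B s p q = (\<Sum>t\<in>{0..<d}. cnj (A s t p) * B s t q)"

lemma tensor_mult:
  assumes "finite Y"
  shows "(\<Sum>l\<in>confs Y d. cnj (tensor_op Y A l y') * tensor_op Y B l y) = tensor_op Y (Cm d A B) y' y"
proof -
  have "(\<Sum>l\<in>confs Y d. cnj (tensor_op Y A l y') * tensor_op Y B l y)
      = (\<Sum>l\<in>confs Y d. \<Prod>s\<in>Y. (\<lambda>s t. cnj (A s t (y' s)) * B s t (y s)) s (l s))"
    unfolding tensor_op_def by (simp add: prod.distrib)
  also have "\<dots> = (\<Prod>s\<in>Y. \<Sum>t\<in>{0..<d}. cnj (A s t (y' s)) * B s t (y s))"
    by (rule prod_sum_confs[OF assms])
  finally show ?thesis unfolding tensor_op_def Cm_def .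
qed

lemma op_mult_lin:
  assumes fY: "finite Y"
  shows "op_mult Y d (op_adj (\<lambda>j k. \<Sum>i<N1. c1 i * tensor_op Y (A1 i) j k)) (\<lambda>j k. \<Sum>i<N2. c2 i * tensor_op Y (A2 i) j k)
    = (\<lambda>y' y. \<Sum>p\<in>{..<N1} \<times> {..<N2}. (cnj (c1 (fst p)) * c2 (snd p)) * tensor_op Y (Cm d (A1 (fst p)) (A2 (snd p))) y' y)"
proof (intro ext)
  fix y' y
  have "op_mult Y d (op_adj (\<lambda>j k. \<Sum>i<N1. c1 i * tensor_op Y (A1 i) j k)) (\<lambda>j k. \<Sum>i<N2. c2 i * tensor_op Y (A2 i) j k) y' y
     = (\<Sum>l\<in>confs Y d. \<Sum>i<N1. \<Sum>i'<N2. (cnj (c1 i) * c2 i') * (cnj (tensor_op Y (A1 i) l y') * tensor_op Y (A2 i') l y))"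
    unfolding op_mult_def op_adj_def by (simp add: sum_distrib_left sum_distrib_right mult_ac)
  also have "\<dots> = (\<Sum>i<N1. \<Sum>l\<in>confs Y d. \<Sum>i'<N2. (cnj (c1 i) * c2 i') * (cnj (tensor_op Y (A1 i) l y') * tensor_op Y (A2 i') l y))"
    by (rule sum.swap)
  also have "\<dots> = (\<Sum>i<N1. \<Sum>i'<N2. \<Sum>l\<in>confs Y d. (cnj (c1 i) * c2 i') * (cnj (tensor_op Y (A1 i) l y') * tensor_op Y (A2 i') l y))"
    by (rule sum.cong[OF refl], rule sum.swap)
  also have "\<dots> = (\<Sum>i<N1. \<Sum>i'<N2. (cnj (c1 i) * c2 i') * tensor_op Y (Cm d (A1 i) (A2 i')) y' y)"
    by (simp add: sum_distrib_left[symmetric] tensor_mult[OF fY])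
  also have "\<dots> = (\<Sum>p\<in>{..<N1} \<times> {..<N2}. (cnj (c1 (fst p)) * c2 (snd p)) * tensor_op Y (Cm d (A1 (fst p)) (A2 (snd p))) y' y)"
    by (simp add: sum.cartesian_product split_def)
  finally show "op_mult Y d (op_adj (\<lambda>j k. \<Sum>i<N1. c1 i * tensor_op Y (A1 i) j k)) (\<lambda>j k. \<Sum>i<N2. c2 i * tensor_op Y (A2 i) j k) y' y
    = (\<Sum>p\<in>{..<N1} \<times> {..<N2}. (cnj (c1 (fst p)) * c2 (snd p)) * tensor_op Y (Cm d (A1 (fst p)) (A2 (snd p))) y' y)" .
qed

lemma Cm_id:
  assumes "\<not> non_identity d (A s)" "\<not> non_identity d (B s)" "p < d" "q < d"
  shows "Cm d A B s p q = (if p = q then 1 else 0)"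
proof -
  have "Cm d A B s p q = (\<Sum>t\<in>{0..<d}. if t = p then (if t = q then 1 else 0) else 0)"
    unfolding Cm_def using assms unfolding non_identity_def by (intro sum.cong refl) auto
  also have "\<dots> = (if p = q then 1 else 0)" using assms by (simp add: sum.delta')
  finally show ?thesis .
qed

lemma extend_subset:
  assumes fY: "finite Y" and SY: "S \<subseteq> Y" and Sk: "card S \<le> k" and kY: "k \<le> card Y"
  shows "\<exists>S'. S \<subseteq> S' \<and> S' \<subseteq> Y \<and> card S' = k"
proof -
  have fS: "finite S" using fY SY by (rule finite_subset[rotated])
  have "k - card S \<le> card (Y - S)" using Sk kY fS SY by (simp add: card_Diff_subset)
  then obtain U where U: "U \<subseteq> Y - S" "card U = k - card S" "finite U"
    by (rule obtain_subset_with_card_n)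
  have "card (S \<union> U) = card S + card U" using U fS by (intro card_Un_disjoint) auto
  hence "card (S \<union> U) = k" using U Sk by simp
  moreover have "S \<union> U \<subseteq> Y" using U SY by auto
  ultimately show ?thesis by blast
qed

lemma good_corrects:
  assumes pd: "prime d" and fX: "finite X" and fY: "finite Y" and XY: "X \<inter> Y = {}"
    and fY2: "2 * f \<le> card Y" and G: "G \<in> adj_mats d (X \<union> Y)" and nb: "G \<notin> badset d X Y (2 * f)"
  shows "corrects d X Y G f"
  unfolding corrects_def
proof (intro ballI)
  fix F1 F2 assume F1: "F1 \<in> error_space d Y f" and F2: "F2 \<in> error_space d Y f"
  obtain N1 :: nat and c1 A1 where A1: "\<forall>i<N1. card {y\<in>Y. non_identity d (A1 i y)} \<le> f"
    and F1eq: "F1 = (\<lambda>j k. \<Sum>i<N1. c1 i * tensor_op Y (A1 i) j k)"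
    using F1 unfolding error_space_def mem_Collect_eq by blast
  obtain N2 :: nat and c2 A2 where A2: "\<forall>i<N2. card {y\<in>Y. non_identity d (A2 i y)} \<le> f"
    and F2eq: "F2 = (\<lambda>j k. \<Sum>i<N2. c2 i * tensor_op Y (A2 i) j k)"
    using F2 unfolding error_space_def mem_Collect_eq by blast
  define I where "I = {..<N1} \<times> {..<N2}"
  define Cp where "Cp p = Cm d (A1 (fst p)) (A2 (snd p))" for p
  define coef where "coef p = cnj (c1 (fst p)) * c2 (snd p)" for p
  have fI: "finite I" unfolding I_def by simp
  have M: "op_mult Y d (op_adj F1) F2 = (\<lambda>y' y. \<Sum>p\<in>I. coef p * tensor_op Y (Cp p) y' y)"
    unfolding F1eq F2eq I_def coef_def Cp_def by (rule op_mult_lin[OF fY])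
  have d0: "d > 0" using pd prime_gt_0_nat by blast
  have sym: "\<And>x y. G x y = G y x" using G unfolding adj_mats_def by blast
  have ex: "\<forall>p\<in>I. \<exists>\<omega>. \<forall>j'\<in>confs X d. \<forall>j\<in>confs X d.
      Lm d X Y G (tensor_op Y (Cp p)) j' j = (if j' = j then \<omega> else 0)"
  proof
    fix p assume p: "p \<in> I"
    define S0 where "S0 = {y\<in>Y. non_identity d (A1 (fst p) y)} \<union> {y\<in>Y. non_identity d (A2 (snd p) y)}"
    have "card S0 \<le> card {y\<in>Y. non_identity d (A1 (fst p) y)} + card {y\<in>Y. non_identity d (A2 (snd p) y)}"
      unfolding S0_def by (rule card_Un_le)
    also have "\<dots> \<le> f + f" using A1 A2 p unfolding I_def by (intro add_mono) auto
    finally have cS0: "card S0 \<le> 2 * f" by simp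
    have S0Y: "S0 \<subseteq> Y" unfolding S0_def by auto
    obtain S where S: "S0 \<subseteq> S" "S \<subseteq> Y" "card S = 2 * f"
      using extend_subset[OF fY S0Y cS0 fY2] by blast
    have good: "\<forall>v\<in>confs (X \<union> S) d. (\<exists>t\<in>X \<union> S. v t \<noteq> 0) \<longrightarrow>
                 \<not> (\<forall>r\<in>Y - S. (\<Sum>t\<in>X \<union> S. G r t * v t) mod d = 0)"
      using nb S unfolding badset_def by blast
    have Cid: "\<forall>s\<in>Y - S. \<forall>p'<d. \<forall>q<d. Cp p s p' q = (if p' = q then 1 else 0)"
    proof (intro ballI allI impI)
      fix s p' q assume s: "s \<in> Y - S" and "p' < d" "q < d"
      have "s \<notin> S0" using s S by auto
      hence "\<not> non_identity d (A1 (fst p) s)" "\<not> non_identity d (A2 (snd p) s)"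
        using s unfolding S0_def by auto
      thus "Cp p s p' q = (if p' = q then 1 else 0)"
        unfolding Cp_def using \<open>p' < d\<close> \<open>q < d\<close> by (rule Cm_id)
    qed
    show "\<exists>\<omega>. \<forall>j'\<in>confs X d. \<forall>j\<in>confs X d.
      Lm d X Y G (tensor_op Y (Cp p)) j' j = (if j' = j then \<omega> else 0)"
      by (rule Lm_tensor[OF fX fY XY S(2) sym d0 good Cid])
  qed
  then obtain \<Omega> where \<Omega>: "\<forall>p\<in>I. \<forall>j'\<in>confs X d. \<forall>j\<in>confs X d.
      Lm d X Y G (tensor_op Y (Cp p)) j' j = (if j' = j then \<Omega> p else 0)"
    by (metis bchoice)
  have L: "\<forall>j'\<in>confs X d. \<forall>j\<in>confs X d.
     Lm d X Y G (op_mult Y d (op_adj F1) F2) j' j = (if j' = j then (\<Sum>p\<in>I. coef p * \<Omega> p) else 0)"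
  proof (intro ballI)
    fix j' j assume j': "j' \<in> confs X d" and j: "j \<in> confs X d"
    have "Lm d X Y G (op_mult Y d (op_adj F1) F2) j' j = (\<Sum>p\<in>I. coef p * Lm d X Y G (tensor_op Y (Cp p)) j' j)"
      unfolding M by (rule Lm_lin[OF fI])
    also have "\<dots> = (\<Sum>p\<in>I. if j' = j then coef p * \<Omega> p else 0)"
      using \<Omega> j j' by (intro sum.cong refl) auto
    also have "\<dots> = (if j' = j then (\<Sum>p\<in>I. coef p * \<Omega> p) else 0)" by simp
    finally show "Lm d X Y G (op_mult Y d (op_adj F1) F2) j' j = (if j' = j then (\<Sum>p\<in>I. coef p * \<Omega> p) else 0)" .
  qed
  show "\<exists>\<omega>. \<forall>\<phi>1 \<phi>2. hinner Y d (apply_code d X Y G \<phi>1)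
          (op_apply Y d (op_mult Y d (op_adj F1) F2) (apply_code d X Y G \<phi>2)) = hinner X d \<phi>1 \<phi>2 * \<omega>"
    using hinner_Lm[OF fX fY L] by blast
qed

theorem proposition3:
  fixes d m n f :: nat and X Y :: "'a set"
  assumes "prime d" and "2 * f < n"
    and "finite X" and "finite Y" and "X \<inter> Y = {}"
    and "card X = m" and "card Y = n"
  defines "P \<equiv> measure_pmf.prob (pmf_of_set (adj_mats d (X \<union> Y)))
                 {G. \<not> corrects d X Y G f}"
  shows "P = 0 \<or>
    1 / real n * log 2 P \<le>
      (real m / real n + 4 * real f / real n - 1) * log 2 (real d) + H2 (2 * real f / real n)"
proof -
  define A where "A = adj_mats d (X \<union> Y)"
  have d1: "d > 1" using assms(1) prime_gt_1_nat by blast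
  have fA: "finite A" unfolding A_def using assms by (intro adj_finite) auto
  have neA: "A \<noteq> {}" unfolding A_def using adj_nonempty[of d] d1 by auto
  have cA: "card A > 0" using fA neA by (simp add: card_gt_0_iff)
  have P: "P = card (A \<inter> {G. \<not> corrects d X Y G f}) / card A"
    unfolding P_def A_def[symmetric] by (rule measure_pmf_of_set[OF neA fA])
  have "A \<inter> {G. \<not> corrects d X Y G f} \<subseteq> A \<inter> badset d X Y (2 * f)"
  proof safe
    fix G assume "G \<in> A" "\<not> corrects d X Y G f"
    thus "G \<in> badset d X Y (2 * f)"
      using good_corrects[OF assms(1,3,4,5), of f G] assms(2,7) unfolding A_def by linarith
  qed
  hence c1: "card (A \<inter> {G. \<not> corrects d X Y G f}) \<le> card (A \<inter> badset d X Y (2 * f))"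
    using fA by (intro card_mono) auto
  have c2: "card (A \<inter> badset d X Y (2 * f)) * d ^ (n - 2 * f) \<le> (n choose (2 * f)) * d ^ (m + 2 * f) * card A"
    using bad_count[OF assms(1,3,4,5), of "2 * f"] assms(2,6,7) unfolding A_def by simp
  define B where "B = real (n choose (2 * f)) * real d ^ (m + 2 * f) / real d ^ (n - 2 * f)"
  have PB: "P \<le> B"
  proof -
    have "real (card (A \<inter> {G. \<not> corrects d X Y G f})) * real d ^ (n - 2 * f)
        \<le> real (n choose (2 * f)) * real d ^ (m + 2 * f) * real (card A)"
    proof -
      have "real (card (A \<inter> {G. \<not> corrects d X Y G f})) * real d ^ (n - 2 * f)
          \<le> real (card (A \<inter> badset d X Y (2 * f))) * real d ^ (n - 2 * f)"
        by (intro mult_right_mono) (use c1 in auto)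
      also have "\<dots> \<le> real (n choose (2 * f)) * real d ^ (m + 2 * f) * real (card A)"
        using of_nat_mono[OF c2, where 'a=real] by simp
      finally show ?thesis .
    qed
    moreover have "real d ^ (n - 2 * f) > 0" using d1 by simp
    ultimately show ?thesis unfolding P B_def using cA
      by (simp add: divide_le_eq le_divide_eq mult.commute mult.left_commute)
  qed
  show ?thesis
  proof (cases "P = 0")
    case True thus ?thesis by simp
  next
    case False
    have P0: "P > 0" using False unfolding P_def by (simp add: less_le)
    have Cpos: "real (n choose (2 * f)) > 0" using assms(2) by simp
    have "log 2 P \<le> log 2 B" using P0 PB by simp
    also have "log 2 B = log 2 (real (n choose (2 * f))) + real (m + 2 * f) * log 2 d - real (n - 2 * f) * log 2 d"
      unfolding B_def using Cpos d1 by (simp add: log_mult log_divide log_nat_power)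
    also have "\<dots> \<le> real n * H2 (real (2 * f) / real n) + (real m + 4 * real f - real n) * log 2 d"
      using binom_entropy[of "2 * f" n] assms(2) by (simp add: of_nat_diff algebra_simps)
    finally have "log 2 P \<le> real n * H2 (2 * real f / real n) + (real m + 4 * real f - real n) * log 2 d"
      by simp
    hence "1 / real n * log 2 P \<le> 1 / real n * (real n * H2 (2 * real f / real n) + (real m + 4 * real f - real n) * log 2 d)"
      using assms(2) by (intro mult_left_mono) auto
    also have "\<dots> = (real m / real n + 4 * real f / real n - 1) * log 2 (real d) + H2 (2 * real f / real n)"
      using assms(2) by (simp add: field_simps)
    finally show ?thesis by simp
  qed
qed

end
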